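(* Let $k\ge2$, $\alpha_1,\dots,\alpha_k\in[0,2\pi)$ and let $n_1,\dots,n_k$ be positive integers with $n_i\ne n_{i+1}$ for every $i\in\{1,\dots,k-1\}$. Then there exists $\phi\in[0,2\pi)$ such that $$V\big(\cos(\alpha_1+\phi n_1),\dots,\cos(\alpha_k+\phi n_k)\big)\ \ge\ \frac{k-1}{8}.$$
   Context: For real numbers $r_1,\dots,r_k$, $V(r_1,\dots,r_k):=|\{i\in\{1,\dots,k-1\}:r_ir_{i+1}<0\}|$ is the number of sign variations. *)

theory Defs
  imports Complex_Main
begin

definition sign_variations :: "real list \<Rightarrow> nat" where
  "sign_variations rs = card {i. i + 1 < length rs \<and> rs ! i * rs ! (i + 1) < 0}"

end

theory Submission imports Defs "HOL-Analysis.Continuum_Not_Denumerable" begin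



lemma cos_sum_zero:
  fixes y :: real and d M :: nat
  assumes "M > 0" "\<not> M dvd d"
  shows "(\<Sum>t<M. cos (y + 2*pi*real d*real t/real M)) = 0"
proof -
  define b where "b = pi*real d/real M"
  have sb: "sin b \<noteq> 0"
  proof
    assume "sin b = 0"
    then obtain i::int where "b = of_int i * pi" using sin_zero_iff_int2 by blast
    then have "real d = of_int i * real M" using assms(1) by (simp add: b_def field_simps)
    then have "int d = i * int M" by (metis of_int_eq_iff of_int_mult of_int_of_nat_eq)
    then have "int M dvd int d" by simp
    thus False using assms(2) by simp
  qed
  define f where "f t = sin (y + b*(2*real t - 1))" for t::nat
  have step: "2*sin b * cos(y + 2*pi*real d*real t/real M) = f (Suc t) - f t" for t
  proof -
    have e: "2*pi*real d*real t/real M = 2*b*real t" by (simp add: b_def)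
    have "f (Suc t) = sin ((y + 2*b*real t) + b)" by (simp add: f_def algebra_simps)
    moreover have "f t = sin ((y + 2*b*real t) - b)" by (simp add: f_def algebra_simps)
    ultimately show ?thesis unfolding e by (simp add: sin_add sin_diff)
  qed
  have "2*sin b * (\<Sum>t<M. cos (y + 2*pi*real d*real t/real M)) = f M - f 0"
    by (simp add: sum_distrib_left step sum_lessThan_telescope)
  also have "f M = f 0"
  proof -
    have eq: "y + b*(2*real M - 1) = (y - b) + 2 * real d * pi" using assms(1) by (simp add: b_def field_simps)
    have "f M = sin (y + b*(2*real M - 1))" by (simp add: f_def)
    also have "\<dots> = sin ((y - b) + 2 * real d * pi)" by (subst eq) (rule refl)
    also have "\<dots> = sin (y - b)" by (simp add: sin_add)
    finally show ?thesis by (simp add: f_def)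
  qed
  finally show ?thesis using sb by simp
qed

lemma cos_add_npi: "cos (x + real t * pi) = (-1)^t * cos x"
proof (induction t)
  case (Suc t)
  have "cos (x + real (Suc t) * pi) = cos ((x + real t * pi) + pi)" by (simp add: algebra_simps)
  also have "\<dots> = - cos (x + real t * pi)" by simp
  finally show ?case using Suc by simp
qed simp

lemma count_alt:
  fixes c :: real assumes "c \<noteq> 0"
  shows "(\<Sum>t<2*p. of_bool ((-1)^t * c < 0) :: real) = real p"
proof (induction p)
  case (Suc p)
  have "2 * Suc p = Suc (Suc (2*p))" by simp
  then have "(\<Sum>t<2*Suc p. of_bool ((-1)^t * c < 0) :: real) =
     (\<Sum>t<2*p. of_bool ((-1)^t * c < 0)) + (of_bool (c < 0) + of_bool (- c < 0))"
    by simp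
  moreover have "of_bool (c < 0) + of_bool (- c < 0) = (1::real)" using assms by auto
  ultimately show ?case using Suc by simp
qed simp

lemma count_neg:
  fixes x :: real and p q :: nat
  assumes "0 < p" "p < q" "2*p = q \<Longrightarrow> cos x \<noteq> 0"
  shows "(\<Sum>t<q. of_bool (cos (x + 2*pi*real p*real t/real q) < 0) :: real) \<ge> real q / 4"
proof (cases "2*p = q")
  case True
  have "cos (x + 2*pi*real p*real t/real q) = (-1)^t * cos x" for t
  proof -
    have "x + 2*pi*real p*real t/real q = x + real t * pi" using True assms(1)
      by (simp add: field_simps flip: True)
    thus ?thesis by (simp add: cos_add_npi)
  qed
  then have "(\<Sum>t<q. of_bool (cos (x + 2*pi*real p*real t/real q) < 0) :: real) = real p"
    using count_alt[OF assms(3)[OF True], of p] True by simp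
  thus ?thesis using True by simp
next
  case False
  define c where "c t = cos (x + 2*pi*real p*real t/real q)" for t
  have q0: "q > 0" using assms by simp
  have nd1: "\<not> q dvd p" using assms by (meson nat_dvd_not_less)
  have nd2: "\<not> q dvd (2*p)"
  proof
    assume "q dvd 2*p"
    then obtain r where r: "2*p = q*r" by (auto elim: dvdE)
    have "r < 2" using r assms(2) by (metis mult_less_cancel1 nat_mult_less_cancel1 q0 mult.commute less_trans not_less_eq zero_less_numeral) 
    moreover have "r \<noteq> 0" using r assms(1) by (cases r) auto
    ultimately have "r = 1" by simp
    thus False using r False by simp
  qed
  have s1: "(\<Sum>t<q. c t) = 0" unfolding c_def by (rule cos_sum_zero[OF q0 nd1])
  define C where "C t = cos (2*x + 2*pi*real (2*p)*real t/real q)" for t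
  have s2: "(\<Sum>t<q. C t) = 0" unfolding C_def by (rule cos_sum_zero[OF q0 nd2])
  have sq: "(c t)^2 = (1 + C t)/2" for t
  proof -
    have e: "2*x + 2*pi*real (2*p)*real t/real q = 2 * (x + 2*pi*real p*real t/real q)"
      by (simp add: field_simps)
    show ?thesis unfolding C_def e cos_double_cos c_def by simp
  qed
  have s3: "(\<Sum>t<q. (c t)^2) = real q / 2"
  proof -
    have "(\<Sum>t<q. (c t)^2) = (\<Sum>t<q. (1 + C t)/2)" by (rule sum.cong) (simp_all add: sq)
    also have "\<dots> = (real q + (\<Sum>t<q. C t))/2"
      by (simp add: sum_divide_distrib[symmetric] sum.distrib)
    also have "(\<Sum>t<q. C t) = 0" by (rule s2)
    finally show ?thesis by simp
  qed
  have pt: "of_bool (c t < 0) \<ge> ((c t)^2 - c t)/2" for t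
  proof -
    have "\<bar>c t\<bar> \<le> 1" by (simp add: c_def)
    show ?thesis
    proof (cases "c t < 0")
      case True
      have "(c t)^2 \<le> 1" using \<open>\<bar>c t\<bar> \<le> 1\<close> by (simp add: abs_square_le_1)
      then show ?thesis using True \<open>\<bar>c t\<bar> \<le> 1\<close> by simp
    next
      case False
      have "c t * c t \<le> c t * 1" using False \<open>\<bar>c t\<bar> \<le> 1\<close>
        by (intro mult_left_mono) auto
      then show ?thesis using False by (simp add: power2_eq_square)
    qed
  qed
  have "(\<Sum>t<q. ((c t)^2 - c t)/2) = real q / 4"
    by (simp add: sum_divide_distrib[symmetric] sum_subtractf s1 s3)
  moreover have "(\<Sum>t<q. ((c t)^2 - c t)/2) \<le> (\<Sum>t<q. of_bool (c t < 0))"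
    by (rule sum_mono) (use pt in auto)
  ultimately show ?thesis by (simp add: c_def)
qed

lemma sum_split_add: "(\<Sum>j<a+b. h j) = (\<Sum>j<a. h j) + (\<Sum>i<b. h (a+i))" for h :: "nat \<Rightarrow> real"
  by (induction b) (simp_all add: add_Suc_right)

lemma sum_regroup: "(\<Sum>j<s*q. h j) = (\<Sum>u<s. \<Sum>t<q. h (u + s*t))" for h :: "nat \<Rightarrow> real"
proof (induction q)
  case (Suc q)
  have e: "s * Suc q = s*q + s" by simp
  have "(\<Sum>j<s*Suc q. h j) = (\<Sum>j<s*q. h j) + (\<Sum>u<s. h (s*q+u))"
    by (simp only: e sum_split_add)
  also have "\<dots> = (\<Sum>u<s. (\<Sum>t<q. h (u + s*t)) + h (u + s*q))"
    by (simp add: Suc sum.distrib add.commute)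
  finally show ?case by simp
qed simp

lemma cos_shift_nat: "cos (x + 2*pi*real t) = cos x"
proof -
  have "2*pi*real t = 2*real t*pi" by simp
  then show ?thesis by (simp only: cos_add cos_2npi sin_2npi)
qed

lemma pair_count:
  fixes a b \<phi>0 :: real and p q N :: nat
  assumes "0<p" "p<q" "q dvd N" "N>0"
    "\<And>j. cos (a + (\<phi>0 + 2*pi*real j/real N) * real p) \<noteq> 0"
    "\<And>j. cos (b + (\<phi>0 + 2*pi*real j/real N) * real q) \<noteq> 0"
  shows "(\<Sum>j<N. of_bool (cos (a + (\<phi>0 + 2*pi*real j/real N) * real p) *
            cos (b + (\<phi>0 + 2*pi*real j/real N) * real q) < 0) :: real) \<ge> real N / 4"
proof -
  obtain s where N: "N = s*q" using assms(3) by (metis dvd_def mult.commute)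
  have s0: "s > 0" using N assms(4) by (cases s) auto
  have q0: "q > 0" using assms by simp
  define H where "H j = (of_bool (cos (a + (\<phi>0 + 2*pi*real j/real N) * real p) *
            cos (b + (\<phi>0 + 2*pi*real j/real N) * real q) < 0) :: real)" for j
  have inner: "(\<Sum>t<q. H (u + s*t)) \<ge> real q / 4" for u
  proof -
    define \<psi> where "\<psi> = \<phi>0 + 2*pi*real u/real N"
    define X where "X = a + \<psi> * real p"
    define Y where "Y = b + \<psi> * real q"
    have X0: "cos X \<noteq> 0" using assms(5)[of u] by (simp add: X_def \<psi>_def)
    have Y0: "cos Y \<noteq> 0" using assms(6)[of u] by (simp add: Y_def \<psi>_def)
    have eY: "b + (\<phi>0 + 2*pi*real (u+s*t)/real N) * real q = Y + 2*pi*real t" for t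
      using s0 q0 by (simp add: Y_def \<psi>_def N field_simps)
    have eX: "a + (\<phi>0 + 2*pi*real (u+s*t)/real N) * real p = X + 2*pi*real p*real t/real q" for t
      using s0 q0 by (simp add: X_def \<psi>_def N field_simps)
    have H: "H (u + s*t) = of_bool (cos (X + 2*pi*real p*real t/real q) * cos Y < 0)" for t
      unfolding H_def eY eX cos_shift_nat by simp
    show ?thesis
    proof (cases "cos Y > 0")
      case True
      have "H (u + s*t) = of_bool (cos (X + 2*pi*real p*real t/real q) < 0)" for t
        unfolding H using True by (simp add: mult_less_0_iff)
      then show ?thesis using count_neg[of p q X] assms(1,2) X0 by simp
    next
      case False
      hence Yn: "cos Y < 0" using Y0 by simp
      have "H (u + s*t) = of_bool (cos ((X + pi) + 2*pi*real p*real t/real q) < 0)" for t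
      proof -
        have "cos ((X + pi) + 2*pi*real p*real t/real q) = - cos (X + 2*pi*real p*real t/real q)"
          by (metis add.commute add.left_commute cos_periodic_pi)
        then show ?thesis unfolding H using Yn by (simp add: mult_less_0_iff)
      qed
      then show ?thesis using count_neg[of p q "X + pi"] assms(1,2) X0 by simp
    qed
  qed
  have "(\<Sum>j<N. H j) = (\<Sum>u<s. \<Sum>t<q. H (u + s*t))" unfolding N by (rule sum_regroup)
  also have "\<dots> \<ge> (\<Sum>u<s. real q / 4)" by (rule sum_mono) (use inner in auto)
  finally have "(\<Sum>j<N. H j) \<ge> real N / 4" by (simp add: N)
  then show ?thesis by (simp add: H_def)
qed

theorem lemma5p5:
  fixes k :: nat and \<alpha> :: "nat \<Rightarrow> real" and n :: "nat \<Rightarrow> nat"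
  assumes "k \<ge> 2"
    and "\<And>i. 1 \<le> i \<Longrightarrow> i \<le> k \<Longrightarrow> 0 \<le> \<alpha> i \<and> \<alpha> i < 2 * pi"
    and "\<And>i. 1 \<le> i \<Longrightarrow> i \<le> k \<Longrightarrow> n i > 0"
    and "\<And>i. 1 \<le> i \<Longrightarrow> i \<le> k - 1 \<Longrightarrow> n i \<noteq> n (i + 1)"
  shows "\<exists>\<phi>. 0 \<le> \<phi> \<and> \<phi> < 2 * pi \<and>
    real (sign_variations (map (\<lambda>i. cos (\<alpha> i + \<phi> * real (n i))) [1..<k+1])) \<ge> (real k - 1) / 8"
proof -
  define N where "N = (\<Prod>i\<in>{1..k}. n i)"
  have N0: "N > 0" unfolding N_def using assms(3) by (intro prod_pos) auto
  have ndvd: "n i dvd N" if "i \<in> {1..k}" for i unfolding N_def using that by (intro dvd_prodI) auto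
  define B where "B = (\<lambda>(i,j,z). (of_int z * (pi/2) - \<alpha> i)/real (n i) - 2*pi*real j/real N) `
     (UNIV :: (nat\<times>nat\<times>int) set)"
  have cB: "countable B" unfolding B_def by simp
  have "uncountable {0<..<2*pi/real N}" using N0 by (simp add: uncountable_open_interval)
  then have "\<not> {0<..<2*pi/real N} \<subseteq> B" using cB countable_subset by blast
  then obtain \<phi>0 where \<phi>0: "0 < \<phi>0" "\<phi>0 < 2*pi/real N" "\<phi>0 \<notin> B" by (meson greaterThanLessThan_iff subsetI)
  have nz: "cos (\<alpha> i + (\<phi>0 + 2*pi*real j/real N) * real (n i)) \<noteq> 0" if "i \<in> {1..k}" for i j
  proof
    assume "cos (\<alpha> i + (\<phi>0 + 2*pi*real j/real N) * real (n i)) = 0"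
    then obtain z where z: "\<alpha> i + (\<phi>0 + 2*pi*real j/real N) * real (n i) = of_int z * (pi/2)"
      using cos_zero_iff_int by blast
    have "n i > 0" using assms(3) that by auto
    then have "\<phi>0 = (of_int z * (pi/2) - \<alpha> i)/real (n i) - 2*pi*real j/real N"
      using z by (simp add: field_simps)
    then have "\<phi>0 \<in> B" unfolding B_def by (intro image_eqI[where x="(i,j,z)"]) auto
    thus False using \<phi>0 by simp
  qed
  define \<Phi> where "\<Phi> j = \<phi>0 + 2*pi*real j/real N" for j
  define P where "P i0 j = (cos (\<alpha> (i0+1) + \<Phi> j * real (n (i0+1))) *
        cos (\<alpha> (i0+2) + \<Phi> j * real (n (i0+2))) < 0)" for i0 j
  define V where "V j = real (sign_variations (map (\<lambda>i. cos (\<alpha> i + \<Phi> j * real (n i))) [1..<k+1]))" for j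
  have Veq: "V j = (\<Sum>i0<k-1. of_bool (P i0 j))" for j
  proof -
    have "{i. i + 1 < length (map (\<lambda>i. cos (\<alpha> i + \<Phi> j * real (n i))) [1..<k+1]) \<and>
        (map (\<lambda>i. cos (\<alpha> i + \<Phi> j * real (n i))) [1..<k+1]) ! i *
        (map (\<lambda>i. cos (\<alpha> i + \<Phi> j * real (n i))) [1..<k+1]) ! (i+1) < 0}
       = {..<k-1} \<inter> {i0. P i0 j}"
      by (auto simp: P_def nth_upt add.commute simp del: upt_Suc)
    then show ?thesis by (simp add: V_def sign_variations_def)
  qed
  have pc: "(\<Sum>j<N. of_bool (P i0 j) :: real) \<ge> real N / 4" if "i0 < k - 1" for i0
  proof -
    have i1: "i0+1 \<in> {1..k}" "i0+2 \<in> {1..k}" using that by auto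
    have pos: "n (i0+1) > 0" "n (i0+2) > 0" using assms(3) i1 by auto
    have ne: "n (i0+1) \<noteq> n (i0+2)" using assms(4)[of "i0+1"] that by auto
    show ?thesis
    proof (cases "n (i0+1) < n (i0+2)")
      case True
      show ?thesis using pair_count[of "n (i0+1)" "n (i0+2)" N "\<alpha> (i0+1)" \<phi>0 "\<alpha> (i0+2)"]
          True pos ndvd[OF i1(2)] N0 nz[OF i1(1)] nz[OF i1(2)]
        by (simp add: P_def \<Phi>_def)
    next
      case False
      then have lt: "n (i0+2) < n (i0+1)" using ne by simp
      show ?thesis using pair_count[of "n (i0+2)" "n (i0+1)" N "\<alpha> (i0+2)" \<phi>0 "\<alpha> (i0+1)"]
          lt pos ndvd[OF i1(1)] N0 nz[OF i1(1)] nz[OF i1(2)]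
        by (simp add: P_def \<Phi>_def mult.commute)
    qed
  qed
  have "(\<Sum>j<N. V j) = (\<Sum>i0<k-1. \<Sum>j<N. of_bool (P i0 j))"
    unfolding Veq by (rule sum.swap)
  also have "\<dots> \<ge> (\<Sum>i0<k-1. real N / 4)" by (rule sum_mono) (use pc in auto)
  finally have tot: "(\<Sum>j<N. V j) \<ge> real (k-1) * real N / 4" by simp
  have "\<exists>j<N. V j \<ge> (real k - 1) / 8"
  proof (rule ccontr)
    assume "\<not> ?thesis"
    then have "\<forall>j\<in>{..<N}. V j < (real k - 1) / 8" by auto
    then have "(\<Sum>j<N. V j) < (\<Sum>j<N. (real k - 1) / 8)"
      using N0 by (intro sum_strict_mono) auto
    then have "(\<Sum>j<N. V j) < real N * (real k - 1) / 8" by simp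
    moreover have "real (k-1) = real k - 1" using assms(1) by simp
    moreover have "real N * (real k - 1) > 0" using assms(1) N0 by simp
    ultimately show False using tot by (simp add: mult.commute)
  qed
  then obtain j where j: "j < N" "V j \<ge> (real k - 1) / 8" by auto
  have "\<Phi> j \<ge> 0" using \<phi>0 by (simp add: \<Phi>_def)
  moreover have "\<Phi> j < 2*pi"
  proof -
    have "\<Phi> j < 2*pi/real N + 2*pi*real j/real N" using \<phi>0 by (simp add: \<Phi>_def)
    also have "\<dots> = 2*pi*(real j + 1)/real N" by (simp add: add_divide_distrib algebra_simps)
    also have "\<dots> \<le> 2*pi*real N/real N"
      using j(1) by (intro divide_right_mono mult_left_mono) auto
    also have "\<dots> = 2*pi" using N0 by simp
    finally show ?thesis .
  qed
  ultimately show ?thesis using j(2) unfolding V_def by blast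
qed

end
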